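(* Let $q$ be a prime power, $t\ge1$, $F=\mathbb{F}_{q^t}$, $B=\mathbb{F}_q$, and let $A=F$, so $n=|F|=q^t$. Suppose $r=n-k=q^s$ for some $s\in\{1,\dots,t\}$. Then any linear repair scheme over $B$ for a single erased symbol of the Reed-Solomon code $\mathrm{RS}(A,k)$ over $F$ requires a bandwidth of at least $(n-1)(t-s)$ sub-symbols over $B$.
   Context: $\mathrm{RS}(A,k)=\{(f(\alpha))_{\alpha\in A} : f\in F[x],\ \deg f<k\}$, with the symbol $f(\alpha)$ stored at node $\alpha$. A linear repair scheme over $B$ for the erased symbol $f(\alpha^* )$ is one in which each node $\alpha\neq\alpha^*$ sends $b_\alpha$ $B$-linear functions (sub-symbols over $B$) of its stored symbol, from which $f(\alpha^* )$ is recovered $B$-linearly; its bandwidth is $\sum_{\alpha\ne\alpha^*} b_\alpha$ sub-symbols. Equivalently, it corresponds to $t$ polynomials $g_1,\dots,g_t\in F[x]$ of degree at most $r-1$ with $\mathrm{rank}_B\{g_i(\alpha^* )\}_{i}=t$, the bandwidth being $\sum_{\alpha\neq\alpha^*}\mathrm{rank}_B\{g_i(\alpha)\}_i$. *)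

theory Defs
  imports "HOL-Computational_Algebra.Polynomial" "HOL-Computational_Algebra.Primes"
begin

definition prime_power :: "nat \<Rightarrow> bool" where
  "prime_power q \<longleftrightarrow> (\<exists>p m. prime p \<and> m \<ge> 1 \<and> q = p ^ m)"

definition subfield :: "'a::field set \<Rightarrow> bool" where
  "subfield B \<longleftrightarrow> 0 \<in> B \<and> 1 \<in> B \<and>
     (\<forall>x\<in>B. \<forall>y\<in>B. x + y \<in> B \<and> x * y \<in> B) \<and>
     (\<forall>x\<in>B. - x \<in> B) \<and> (\<forall>x\<in>B. x \<noteq> 0 \<longrightarrow> inverse x \<in> B)"

text \<open>A B-linear function F \<rightarrow> B (a sub-symbol over B of a stored symbol).\<close>
definition B_functional :: "'a::field set \<Rightarrow> ('a \<Rightarrow> 'a) \<Rightarrow> bool" where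
  "B_functional B l \<longleftrightarrow> (\<forall>x y. l (x + y) = l x + l y) \<and>
     (\<forall>c\<in>B. \<forall>x. l (c * x) = c * l x) \<and> (\<forall>x. l x \<in> B)"

text \<open>Codewords of RS(A,k): evaluations of polynomials f with deg f < k
  (the zero polynomial always included).\<close>
definition RS_poly :: "nat \<Rightarrow> 'a::field poly \<Rightarrow> bool" where
  "RS_poly k f \<longleftrightarrow> f = 0 \<or> degree f < k"

text \<open>Linear repair scheme over B for node a0 of RS(A,k): node a \<noteq> a0 sends the
  sub-symbols (Q a ! j) (f a), j < length (Q a), each a B-linear function of its
  stored symbol; f(a0) is recovered as a B-linear function of all received
  sub-symbols, i.e. as a B-linear combination with coefficients W a ! j \<in> F
  (every B-linear map B^N \<rightarrow> F has this form).\<close>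
definition linear_repair_scheme ::
  "'a::field set \<Rightarrow> 'a set \<Rightarrow> nat \<Rightarrow> 'a \<Rightarrow> ('a \<Rightarrow> ('a \<Rightarrow> 'a) list) \<Rightarrow> ('a \<Rightarrow> 'a list) \<Rightarrow> bool" where
  "linear_repair_scheme B A k a0 Q W \<longleftrightarrow> a0 \<in> A \<and>
     (\<forall>a\<in>A - {a0}. (\<forall>l\<in>set (Q a). B_functional B l) \<and> length (W a) = length (Q a)) \<and>
     (\<forall>f. RS_poly k f \<longrightarrow>
        poly f a0 = (\<Sum>a\<in>A - {a0}. \<Sum>j<length (Q a). W a ! j * (Q a ! j) (poly f a)))"

definition bandwidth :: "'a set \<Rightarrow> 'a \<Rightarrow> ('a \<Rightarrow> ('a \<Rightarrow> 'a) list) \<Rightarrow> nat" where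
  "bandwidth A a0 Q = (\<Sum>a\<in>A - {a0}. length (Q a))"

end

theory Submission
  imports Defs Complex_Main
begin


lemma subfield_diff:
  fixes B :: "'a::field set"
  assumes "subfield B" "x \<in> B" "y \<in> B" shows "x - y \<in> B"
  using assms unfolding subfield_def by (metis diff_conv_add_uminus)

lemma subfield_card_zero:
  fixes B :: "'a::field set"
  assumes "subfield B" "finite B"
  shows "of_nat (card B) = (0::'a)"
proof -
  have "(\<Sum>y\<in>B. 1 + y) = (\<Sum>y\<in>B. y)"
    by (rule sum.reindex_bij_witness[of _ "\<lambda>y. y + - 1" "\<lambda>y. 1 + y"])
       (use assms subfield_diff[OF assms(1)] in \<open>auto simp: subfield_def\<close>)
  then show ?thesis by (simp add: sum.distrib)
qed

lemma subfield_power_card: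
  fixes B :: "'a::field set"
  assumes "subfield B" "finite B" "x \<in> B"
  shows "x ^ card B = x"
proof (cases "x = 0")
  case True
  have "card B > 0" using assms by (auto simp: card_gt_0_iff)
  then show ?thesis using True by simp
next
  case False
  have cB: "card B = Suc (card (B - {0}))"
    using assms by (metis card_Suc_Diff1 subfield_def)
  have "(\<Prod>y\<in>B-{0}. x * y) = (\<Prod>y\<in>B-{0}. y)"
    by (rule prod.reindex_bij_witness[of _ "\<lambda>y. inverse x * y" "\<lambda>y. x * y"])
       (use assms False in \<open>auto simp: subfield_def\<close>)
  moreover have "(\<Prod>y\<in>B-{0}. x * y) = x ^ card (B - {0}) * (\<Prod>y\<in>B-{0}. y)"
    by (simp add: prod.distrib)
  moreover have "(\<Prod>y\<in>B-{0}. y) \<noteq> 0" using assms by simp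
  ultimately have "x ^ card (B - {0}) = 1" by simp
  then show ?thesis using cB by simp
qed

lemma char_is:
  fixes B :: "'a::field set"
  assumes "subfield B" "finite B" "card B = p ^ m" "prime p" "m \<ge> 1"
  shows "CHAR('a) = p"
proof -
  have "of_nat (p ^ m) = (0::'a)" using subfield_card_zero[OF assms(1,2)] assms(3) by simp
  then have d: "CHAR('a) dvd p ^ m" using of_nat_eq_0_iff_char_dvd by blast
  have "CHAR('a) > 0" using d assms(4) by (metis gr0I dvd_0_left_iff power_not_zero not_prime_0)
  then have pc: "prime CHAR('a)" by (rule prime_CHAR_semidom)
  then have "CHAR('a) dvd p" using prime_dvd_power[OF pc d] by blast
  then show ?thesis using pc assms(4) by (simp add: primes_dvd_imp_eq)
qed

lemma frob_add:
  fixes x y :: "'a::field" and B :: "'a set"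
  assumes "subfield B" "finite B" "card B = q" "prime_power q"
  shows "(x + y) ^ (q ^ i) = x ^ (q ^ i) + y ^ (q ^ i)"
proof -
  obtain p m where pm: "prime p" "m \<ge> 1" "q = p ^ m" using assms(4) by (auto simp: prime_power_def)
  have c: "CHAR('a) = p" using char_is[of B p m] assms pm by simp
  show ?thesis
    by (rule freshmans_dream'[where n="m*i"]) (use c pm in \<open>auto simp: power_mult\<close>)
qed

lemma frob_sum:
  fixes g :: "'b \<Rightarrow> 'a::field" and B :: "'a set"
  assumes "subfield B" "finite B" "card B = q" "prime_power q"
  shows "(sum g A) ^ (q ^ i) = (\<Sum>a\<in>A. g a ^ (q ^ i))"
proof -
  have q0: "q > 0" using assms(4) by (auto simp: prime_power_def prime_gt_0_nat)
  show ?thesis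
  proof (induction A rule: infinite_finite_induct)
    case (insert x F)
    then show ?case using frob_add[OF assms] by simp
  qed (use q0 in simp_all)
qed

definition trf :: "nat \<Rightarrow> nat \<Rightarrow> 'a::field \<Rightarrow> 'a" where
  "trf q t y = (\<Sum>i<t. y ^ (q ^ i))"

lemma tr_add:
  fixes B :: "'a::field set" and x y :: 'a
  assumes "subfield B" "finite B" "card B = q" "prime_power q"
  shows "trf q t (x + y) = trf q t x + trf q t y"
  unfolding trf_def by (simp add: frob_add[OF assms] sum.distrib)

lemma tr_zero:
  assumes "prime_power q"
  shows "trf q t 0 = 0"
proof -
  have "q > 0" using assms by (auto simp: prime_power_def prime_gt_0_nat)
  then show ?thesis unfolding trf_def by (simp add: power_0_left)
qed

lemma tr_diff:
  fixes B :: "'a::field set" and x y :: 'a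
  assumes "subfield B" "finite B" "card B = q" "prime_power q"
  shows "trf q t (x - y) = trf q t x - trf q t y"
  using tr_add[OF assms, of t "x - y" y] by (simp add: algebra_simps)

lemma tr_sum:
  fixes B :: "'a::field set" and g :: "'b \<Rightarrow> 'a"
  assumes "subfield B" "finite B" "card B = q" "prime_power q"
  shows "trf q t (sum g A) = (\<Sum>a\<in>A. trf q t (g a))"
  by (induction A rule: infinite_finite_induct) (auto simp: tr_zero[OF assms(4)] tr_add[OF assms])

lemma B_pow:
  fixes B :: "'a::field set"
  assumes "subfield B" "finite B" "card B = q" "c \<in> B"
  shows "c ^ (q ^ i) = c"
proof (induction i)
  case (Suc i)
  have "c ^ (q ^ Suc i) = (c ^ (q ^ i)) ^ q" by (simp add: power_mult[symmetric] mult.commute)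
  then show ?case using Suc subfield_power_card[OF assms(1,2,4)] assms(3) by simp
qed simp

lemma tr_smult:
  fixes B :: "'a::field set"
  fixes y :: 'a
  assumes "subfield B" "finite B" "card B = q" "c \<in> B"
  shows "trf q t (c * y) = c * trf q t y"
  unfolding trf_def using B_pow[OF assms] by (simp add: power_mult_distrib sum_distrib_left)

lemma subfield_UNIV: "subfield (UNIV :: 'a::field set)"
  by (simp add: subfield_def)

lemma pp_ge2: "prime_power q \<Longrightarrow> q \<ge> 2"
proof -
  assume "prime_power q"
  then obtain p m where pm: "prime p" "m \<ge> 1" "q = p ^ m" by (auto simp: prime_power_def)
  have p2: "p \<ge> 2" using pm(1) by (rule prime_ge_2_nat)
  have "p ^ 1 \<le> p ^ m" by (rule power_increasing) (use pm p2 in auto)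
  then show "q \<ge> 2" using p2 pm(3) by simp
qed

lemma roots_q:
  fixes B :: "'a::field set"
  assumes "subfield B" "finite B" "card B = q" "prime_power q" "z ^ q = z"
  shows "z \<in> B"
proof -
  have q2: "q \<ge> 2" using pp_ge2[OF assms(4)] .
  define P :: "'a poly" where "P = monom 1 q - monom 1 1"
  have ev: "poly P x = x ^ q - x" for x by (simp add: P_def poly_monom)
  have "coeff P q = 1" using q2 by (simp add: P_def)
  then have P0: "P \<noteq> 0" by auto
  have dg: "degree P \<le> q" unfolding P_def
    by (rule degree_diff_le) (use q2 in \<open>auto intro: order.trans[OF degree_monom_le]\<close>)
  have "card {x. poly P x = 0} \<le> q" using card_poly_roots_bound[OF P0] dg by linarith
  moreover have sub: "B \<subseteq> {x. poly P x = 0}"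
    using subfield_power_card[OF assms(1,2)] assms(3) by (auto simp: ev)
  moreover have fin: "finite {x. poly P x = 0}" using poly_roots_finite[OF P0] .
  ultimately have "B = {x. poly P x = 0}"
    using assms(3) by (metis card_seteq)
  then show ?thesis using assms(5) by (simp add: ev)
qed

lemma tr_in_B:
  fixes B :: "'a::{field,finite} set" and y :: 'a
  assumes "subfield B" "card B = q" "prime_power q" "card (UNIV::'a set) = q ^ t" "t \<ge> 1"
  shows "trf q t y \<in> B"
proof -
  have fB: "finite B" by simp
  obtain t' where t': "t = Suc t'" using assms(5) by (cases t) auto
  have yy: "y ^ (q ^ t) = y" using subfield_power_card[OF subfield_UNIV, of y] assms(4) by simp
  have "trf q t y ^ (q ^ 1) = (\<Sum>i<t. (y ^ (q ^ i)) ^ (q ^ 1))"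
    unfolding trf_def by (rule frob_sum[OF assms(1) fB assms(2,3)])
  also have "\<dots> = (\<Sum>i<t. y ^ (q ^ Suc i))"
    by (simp add: power_mult[symmetric] mult.commute)
  also have "\<dots> = (\<Sum>i<t'. y ^ (q ^ Suc i)) + y ^ (q ^ t)"
    by (simp add: t')
  also have "\<dots> = y ^ (q ^ 0) + (\<Sum>i<t'. y ^ (q ^ Suc i))" using yy by simp
  also have "\<dots> = trf q t y" unfolding trf_def t' by (subst sum.lessThan_Suc_shift) simp
  finally have "trf q t y ^ q = trf q t y" by simp
  then show ?thesis using roots_q[OF assms(1) fB assms(2,3)] by blast
qed

lemma tr_nonzero:
  fixes B :: "'a::{field,finite} set"
  assumes "prime_power q" "card (UNIV::'a set) = q ^ t" "t \<ge> 1"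
  shows "\<exists>y::'a. trf q t y \<noteq> 0"
proof (rule ccontr)
  assume "\<not> ?thesis"
  then have all: "trf q t y = 0" for y :: 'a by auto
  have q2: "q \<ge> 2" using pp_ge2[OF assms(1)] .
  define P :: "'a poly" where "P = (\<Sum>i<t. monom 1 (q ^ i))"
  have ev: "poly P x = trf q t x" for x by (simp add: P_def trf_def poly_sum poly_monom)
  have "coeff P (q ^ (t - 1)) = (\<Sum>i<t. if i = t - 1 then 1 else 0)"
    unfolding P_def coeff_sum using q2 by (intro sum.cong) (auto simp: coeff_monom)
  also have "\<dots> = 1" using assms(3) by simp
  finally have P0: "P \<noteq> 0" by auto
  have dg: "degree P \<le> q ^ (t - 1)" unfolding P_def
  proof (rule degree_sum_le)
    fix i assume "i \<in> {..<t}"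
    then have "q ^ i \<le> q ^ (t - 1)" using q2 by (intro power_increasing) auto
    then show "degree (monom (1::'a) (q ^ i)) \<le> q ^ (t - 1)"
      using degree_monom_le order.trans by blast
  qed simp
  have "card {x. poly P x = 0} \<le> q ^ (t - 1)" using card_poly_roots_bound[OF P0] dg by linarith
  moreover have "{x. poly P x = 0} = UNIV" using all ev by auto
  moreover have "q ^ (t - 1) < q ^ t" using q2 assms(3) by (simp add: power_strict_increasing)
  ultimately show False using assms(2) by simp
qed



lemma factA:
  fixes B :: "'a::{field,finite} set" and Ws :: "'a list"
  assumes sf: "subfield B" and cB: "card B = q" and pp: "prime_power q"
    and cU: "card (UNIV::'a set) = q ^ t" and t1: "t \<ge> 1"
  shows "card (UNIV::'a set) \<le> q ^ length Ws * card {c. \<forall>j<length Ws. trf q t (c * Ws ! j) = 0}"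
proof -
  have fB: "finite B" by simp
  define h where "h c = map (\<lambda>j. trf q t (c * Ws ! j)) [0..<length Ws]" for c
  define L where "L = {xs. set xs \<subseteq> B \<and> length xs = length Ws}"
  define K where "K = {c. \<forall>j<length Ws. trf q t (c * Ws ! j) = 0}"
  define rep where "rep v = (SOME c. h c = v)" for v
  define g where "g c = (h c, c - rep (h c))" for c
  have hrep: "h (rep (h c)) = h c" for c unfolding rep_def by (rule someI_ex) blast
  have "inj g" unfolding g_def inj_def by auto
  moreover have "g ` UNIV \<subseteq> L \<times> K"
  proof (rule image_subsetI)
    fix c
    have 1: "h c \<in> L" unfolding L_def h_def
      using tr_in_B[OF sf cB pp cU t1] by auto
    have 2: "c - rep (h c) \<in> K" unfolding K_def
    proof (safe)
      fix j assume j: "j < length Ws"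
      have "h (rep (h c)) ! j = h c ! j" using hrep by simp
      then have "trf q t (rep (h c) * Ws ! j) = trf q t (c * Ws ! j)"
        using j by (simp add: h_def)
      then show "trf q t ((c - rep (h c)) * Ws ! j) = 0"
        using tr_diff[OF sf fB cB pp, of t "c * Ws ! j" "rep (h c) * Ws ! j"]
        by (simp add: algebra_simps)
    qed
    show "g c \<in> L \<times> K" using 1 2 by (simp add: g_def)
  qed
  moreover have "finite (L \<times> K)" unfolding L_def using finite_lists_length_eq[OF fB] by simp
  ultimately have "card (UNIV :: 'a set) \<le> card (L \<times> K)"
    by (metis card_inj_on_le inj_on_subset subset_UNIV)
  also have "\<dots> = q ^ length Ws * card K"
    unfolding L_def by (simp add: card_cartesian_product card_lists_length_eq[OF fB] cB)
  finally show ?thesis unfolding K_def .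
qed

lemma B_functional_zero: "B_functional B l \<Longrightarrow> l 0 = 0"
  unfolding B_functional_def by (metis add_0_right add_left_imp_eq)

lemma factB:
  fixes B :: "'a::{field,finite} set" and Q :: "'a \<Rightarrow> ('a \<Rightarrow> 'a) list" and W :: "'a \<Rightarrow> 'a list"
  assumes sf: "subfield B" and cB: "card B = q" and pp: "prime_power q"
    and cU: "card (UNIV::'a set) = q ^ t" and t1: "t \<ge> 1"
    and sch: "linear_repair_scheme B (UNIV :: 'a set) k a0 Q W"
    and kr: "card (UNIV::'a set) - k = r" and r0: "r > 0" and c0: "c \<noteq> 0"
  shows "card {a \<in> UNIV - {a0}. \<forall>j<length (Q a). trf q t (c * W a ! j) = 0} < r"
proof (rule ccontr)
  have fB: "finite B" by simp
  define U where "U = (UNIV :: 'a set) - {a0}"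
  define Z where "Z = {a \<in> U. \<forall>j<length (Q a). trf q t (c * W a ! j) = 0}"
  define R where "R = U - Z"
  assume "\<not> card {a \<in> UNIV - {a0}. \<forall>j<length (Q a). trf q t (c * W a ! j) = 0} < r"
  then have Zr: "card Z \<ge> r" unfolding Z_def U_def by simp
  have cUU: "card U = card (UNIV :: 'a set) - 1" unfolding U_def by (simp add: card_Diff_singleton)
  have "card Z \<le> card U" unfolding Z_def by (rule card_mono) auto
  have cR: "card R = card U - card Z" unfolding R_def
    by (rule card_Diff_subset) (auto simp: Z_def)
  have kk: "card R < k" using kr r0 Zr cR cUU \<open>card Z \<le> card U\<close> by linarith
  obtain y0 :: 'a where y0: "trf q t y0 \<noteq> 0" using tr_nonzero[OF pp cU t1] by blast
  define P where "P = (\<Prod>a\<in>R. a0 - a)"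
  have P0: "P \<noteq> 0" unfolding P_def by (auto simp: R_def U_def)
  define d where "d = y0 / (c * P)"
  define f where "f = smult d (\<Prod>a\<in>R. [:- a, 1:])"
  have pf: "poly f x = d * (\<Prod>a\<in>R. x - a)" for x
    unfolding f_def by (simp add: poly_prod)
  have "degree f \<le> card R"
  proof -
    have "degree f \<le> degree (\<Prod>a\<in>R. [:- a, 1:])" unfolding f_def by simp
    also have "\<dots> \<le> sum (degree \<circ> (\<lambda>a. [:- a, 1:])) R" by (rule degree_prod_sum_le) simp
    also have "\<dots> = card R" by simp
    finally show ?thesis .
  qed
  then have RS: "RS_poly k f" unfolding RS_poly_def using kk by simp
  have ls: "\<forall>a\<in>U. (\<forall>l\<in>set (Q a). B_functional B l) \<and> length (W a) = length (Q a)"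
    using sch unfolding linear_repair_scheme_def U_def by blast
  have eq: "poly f a0 = (\<Sum>a\<in>U. \<Sum>j<length (Q a). W a ! j * (Q a ! j) (poly f a))"
    using sch RS unfolding linear_repair_scheme_def U_def by blast
  have "trf q t y0 = trf q t (c * poly f a0)" using P0 c0 by (simp add: pf P_def[symmetric] d_def)
  also have "\<dots> = (\<Sum>a\<in>U. \<Sum>j<length (Q a). trf q t ((Q a ! j) (poly f a) * (c * W a ! j)))"
    unfolding eq by (simp add: sum_distrib_left tr_sum[OF sf fB cB pp] algebra_simps)
  also have "\<dots> = (\<Sum>a\<in>U. \<Sum>j<length (Q a). 0)"
  proof (intro sum.cong refl)
    fix a j assume a: "a \<in> U" and j: "j \<in> {..<length (Q a)}"
    have bf: "B_functional B (Q a ! j)" using ls a j by auto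
    then have inB: "(Q a ! j) (poly f a) \<in> B" unfolding B_functional_def by blast
    show "trf q t ((Q a ! j) (poly f a) * (c * W a ! j)) = 0"
    proof (cases "a \<in> Z")
      case True
      then have "trf q t (c * W a ! j) = 0" using j unfolding Z_def by auto
      then show ?thesis using tr_smult[OF sf fB cB inB] by simp
    next
      case False
      then have "a \<in> R" using a unfolding R_def by blast
      then have "poly f a = 0" unfolding pf by (auto simp: prod_zero_iff)
      then show ?thesis using B_functional_zero[OF bf] tr_zero[OF pp] by simp
    qed
  qed
  finally show False using y0 tr_zero[OF pp] by simp
qed

lemma sum_ind: "finite S \<Longrightarrow> (\<Sum>c\<in>S. if P c then 1 else 0) = card {c\<in>S. P c}"
  using sum.inter_filter[of S "\<lambda>_. 1::nat" P] by simp

theorem corollary1: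
  fixes B :: "'a::{field,finite} set" and q t s k :: nat and a0 :: 'a
    and Q :: "'a \<Rightarrow> ('a \<Rightarrow> 'a) list" and W :: "'a \<Rightarrow> 'a list"
  assumes "prime_power q" and "t \<ge> 1"
    and "subfield B" and "card B = q" and "card (UNIV :: 'a set) = q ^ t"
    and "s \<in> {1..t}" and "card (UNIV :: 'a set) - k = q ^ s"
    and "linear_repair_scheme B (UNIV :: 'a set) k a0 Q W"
  shows "bandwidth (UNIV :: 'a set) a0 Q \<ge> (card (UNIV :: 'a set) - 1) * (t - s)"
proof -
  note pp = assms(1) and t1 = assms(2) and sf = assms(3) and cB = assms(4) and cU = assms(5)
    and sch = assms(8)
  have q2: "q \<ge> 2" using pp_ge2[OF pp] .
  have st: "s \<le> t" using assms(6) by simp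
  define n where "n = card (UNIV :: 'a set)"
  define U where "U = (UNIV :: 'a set) - {a0}"
  define K where "K a = {c. \<forall>j<length (Q a). trf q t (c * W a ! j) = 0}" for a
  have cUU: "card U = n - 1" unfolding U_def n_def by (simp add: card_Diff_singleton)
  have lenW: "length (W a) = length (Q a)" if "a \<in> U" for a
    using sch that unfolding linear_repair_scheme_def U_def by blast
  have A: "n \<le> q ^ length (Q a) * card (K a)" if "a \<in> U" for a
    using factA[OF sf cB pp cU t1, of "W a"] lenW[OF that] unfolding n_def K_def by simp
  have Bf: "card {a \<in> U. c \<in> K a} \<le> q ^ s - 1" if "c \<noteq> 0" for c
  proof -
    have "q ^ s > 0" using q2 by simp
    from factB[OF sf cB pp cU t1 sch assms(7) this that]
    have "card {a \<in> U. c \<in> K a} < q ^ s" unfolding U_def K_def by simp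
    then show ?thesis by linarith
  qed
  have K0: "0 \<in> K a" for a unfolding K_def by (simp add: tr_zero[OF pp])
  have cK: "card (K a) = Suc (card (K a - {0}))" for a
    using card_Suc_Diff1[of "K a" 0] K0 by simp
  have "(\<Sum>a\<in>U. card (K a - {0})) = (\<Sum>a\<in>U. \<Sum>c\<in>UNIV - {0}. if c \<in> K a then 1 else 0)"
  proof (intro sum.cong refl)
    fix a
    have "K a - {0} = {c \<in> UNIV - {0}. c \<in> K a}" by auto
    then show "card (K a - {0}) = (\<Sum>c\<in>UNIV - {0}. if c \<in> K a then 1 else 0)"
      by (simp only: sum_ind[OF finite])
  qed
  also have "\<dots> = (\<Sum>c\<in>UNIV - {0}. \<Sum>a\<in>U. if c \<in> K a then 1 else 0)"
    by (rule sum.swap)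
  also have "\<dots> = (\<Sum>c\<in>UNIV - {0}. card {a \<in> U. c \<in> K a})"
    by (intro sum.cong refl) (simp only: sum_ind[OF finite])
  also have "\<dots> \<le> (\<Sum>c\<in>(UNIV::'a set) - {0}. q ^ s - 1)"
    by (intro sum_mono Bf) auto
  also have "\<dots> = (n - 1) * (q ^ s - 1)"
  proof -
    have "card ((UNIV::'a set) - {0}) = n - 1" unfolding n_def
      by (rule card_Diff_singleton) simp
    then show ?thesis by (simp only: sum_constant of_nat_id)
  qed
  finally have C0: "(\<Sum>a\<in>U. card (K a - {0})) \<le> (n - 1) * (q ^ s - 1)" .
  have "(\<Sum>a\<in>U. card (K a)) = (\<Sum>a\<in>U. card (K a - {0})) + card U"
    unfolding cK by (rule sum_Suc)
  also have "\<dots> \<le> (n - 1) * (q ^ s - 1) + (n - 1)" using C0 cUU by simp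
  also have "\<dots> = (n - 1) * q ^ s"
  proof -
    have "q ^ s > 0" using q2 by simp
    then obtain e where e: "q ^ s = Suc e" using gr0_implies_Suc by blast
    show ?thesis unfolding e by simp
  qed
  finally have C: "(\<Sum>a\<in>U. card (K a)) \<le> (n - 1) * q ^ s" .
  define x where "x a = real t - real s - real (length (Q a))" for a
  have qpos: "(0::real) < q" using q2 by simp
  have lq: "ln (real q) > 0" using q2 by simp
  have D1: "1 + x a * ln q \<le> real (card (K a)) / real q ^ s" if "a \<in> U" for a
  proof -
    have "1 + x a * ln q \<le> exp (x a * ln q)" by (rule exp_ge_add_one_self)
    also have "\<dots> = real q powr x a" using qpos by (simp add: powr_def mult.commute)
    also have "\<dots> = real q powr real t / real q powr real s / real q powr real (length (Q a))"
      unfolding x_def by (simp only: powr_diff)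
    also have "\<dots> = real q ^ t / real q ^ s / real q ^ length (Q a)"
      using qpos by (simp only: powr_realpow)
    also have "\<dots> \<le> real (card (K a)) / real q ^ s"
    proof -
      have "real n \<le> real q ^ length (Q a) * real (card (K a))"
        using A[OF that] by (metis of_nat_le_iff of_nat_mult of_nat_power)
      then have "real q ^ t \<le> real q ^ length (Q a) * real (card (K a))"
        using cU unfolding n_def by simp
      then have h: "real q ^ t / real q ^ length (Q a) \<le> real (card (K a))"
        using qpos by (simp add: divide_le_eq mult.commute)
      have "real q ^ t / real q ^ s / real q ^ length (Q a) = (real q ^ t / real q ^ length (Q a)) / real q ^ s"
        by simp
      also have "\<dots> \<le> real (card (K a)) / real q ^ s"
        using h qpos by (intro divide_right_mono) simp_all
      finally show ?thesis .
    qed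
    finally show ?thesis .
  qed
  have S1: "(\<Sum>a\<in>U. 1 + x a * ln q) \<le> (\<Sum>a\<in>U. real (card (K a)) / real q ^ s)"
    by (intro sum_mono D1)
  have S2: "(\<Sum>a\<in>U. real (card (K a)) / real q ^ s) = real (\<Sum>a\<in>U. card (K a)) / real q ^ s"
    by (simp add: sum_divide_distrib)
  have C': "real (\<Sum>a\<in>U. card (K a)) \<le> real (n - 1) * real q ^ s"
    using C by (metis of_nat_le_iff of_nat_mult of_nat_power)
  have S3: "real (\<Sum>a\<in>U. card (K a)) / real q ^ s \<le> real (n - 1)"
    using C' qpos by (simp add: divide_le_eq)
  have S4: "(\<Sum>a\<in>U. 1 + x a * ln q) = real (n - 1) + ln q * (\<Sum>a\<in>U. x a)"
    using cUU by (simp add: sum.distrib sum_distrib_right mult.commute)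
  have "ln q * (\<Sum>a\<in>U. x a) \<le> 0" using S1 S2 S3 S4 by linarith
  then have "(\<Sum>a\<in>U. x a) \<le> 0" using lq by (simp add: mult_le_0_iff)
  moreover have "(\<Sum>a\<in>U. x a) = real (n - 1) * (real t - real s) - (\<Sum>a\<in>U. real (length (Q a)))"
    unfolding x_def using cUU by (simp add: sum_subtractf)
  ultimately have "real (n - 1) * real (t - s) \<le> real (\<Sum>a\<in>U. length (Q a))"
    using st by (simp add: of_nat_diff)
  then have "real ((n - 1) * (t - s)) \<le> real (\<Sum>a\<in>U. length (Q a))"
    by simp
  then show ?thesis unfolding bandwidth_def n_def U_def by (simp only: of_nat_le_iff)
qed

end
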